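(* Let $\mathcal C$ be a category of noncrossing $\{x,y\}$-coloured partitions ($x^{-1}=x$, $y^{-1}=y$) all of whose blocks have even size. If $\mathcal C$ contains a partition with a block of size at least four, then $\pi(xx,xx)\in\mathcal C$ or $\pi(yy,yy)\in\mathcal C$.
   Context: Colour sets and partitions: a colour set is a set $\mathcal A$ with an involution $a\mapsto a^{-1}$. For words $w,w'$ on $\mathcal A$, an element of $P^{\mathcal A}(w,w')$ is a partition of $|w|+|w'|$ points drawn as an upper row coloured (left to right) by $w$ and a lower row coloured by $w'$; its subsets are blocks. It is noncrossing if there are no four points $k_1<k_2<k_3<k_4$ (ordering: upper row left to right, then lower row right to left) with $k_1,k_3$ in one block and $k_2,k_4$ in a different block. Category operations: tensor product, composition (erasing middle points and closed loops), adjoint (reflection), rotation (moving an extreme point to the other row and replacing its colour $a$ by $a^{-1}$). A category of noncrossing partitions is a family $\mathcal C(w,w')\subset NC^{\mathcal A}(w,w')$ stable under these operations and containing $\pi(a,a)$ for all $a$. $\pi(w,w')$ denotes the one-block partition in $NC(w,w')$. *)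

theory Defs
  imports Main "HOL-Library.Disjoint_Sets"
begin

text \<open>Points of a partition in P(w,w'): Up i is the i-th upper point (left to right,
  starting at 0), Lo j is the j-th lower point (left to right, starting at 0).\<close>
datatype pt = Up nat | Lo nat

text \<open>A coloured partition: (upper word w, lower word w', set of blocks).\<close>
type_synonym 'a part = "'a list \<times> 'a list \<times> pt set set"

definition points :: "nat \<Rightarrow> nat \<Rightarrow> pt set" where
  "points n m = {Up i | i. i < n} \<union> {Lo j | j. j < m}"

definition is_part :: "'a part \<Rightarrow> bool" where
  "is_part p = (case p of (w, v, B) \<Rightarrow> partition_on (points (length w) (length v)) B)"

fun pos :: "nat \<Rightarrow> nat \<Rightarrow> pt \<Rightarrow> nat" where
  "pos n m (Up i) = i"
| "pos n m (Lo j) = n + (m - 1 - j)"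

definition noncrossing :: "'a part \<Rightarrow> bool" where
  "noncrossing p = (case p of (w, v, B) \<Rightarrow>
     \<not> (\<exists>b1\<in>B. \<exists>b2\<in>B. b1 \<noteq> b2 \<and> (\<exists>k1 k2 k3 k4.
          k1 \<in> b1 \<and> k3 \<in> b1 \<and> k2 \<in> b2 \<and> k4 \<in> b2 \<and>
          pos (length w) (length v) k1 < pos (length w) (length v) k2 \<and>
          pos (length w) (length v) k2 < pos (length w) (length v) k3 \<and>
          pos (length w) (length v) k3 < pos (length w) (length v) k4)))"

fun shift :: "nat \<Rightarrow> nat \<Rightarrow> pt \<Rightarrow> pt" where
  "shift n m (Up i) = Up (i + n)"
| "shift n m (Lo j) = Lo (j + m)"

definition tensor :: "'a part \<Rightarrow> 'a part \<Rightarrow> 'a part" where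
  "tensor p q = (case p of (w1, v1, B1) \<Rightarrow> case q of (w2, v2, B2) \<Rightarrow>
     (w1 @ w2, v1 @ v2, B1 \<union> (image (shift (length w1) (length v1))) ` B2))"

fun swp :: "pt \<Rightarrow> pt" where
  "swp (Up i) = Lo i"
| "swp (Lo i) = Up i"

definition adjoint :: "'a part \<Rightarrow> 'a part" where
  "adjoint p = (case p of (w, v, B) \<Rightarrow> (v, w, (image swp) ` B))"

text \<open>Composition: p in P(w,v) on top, q in P(v,u) below; middle points are identified,
  connected components are formed, and middle points (and closed loops) are erased.\<close>
fun cfp :: "pt \<Rightarrow> pt + nat" where
  "cfp (Up i) = Inl (Up i)"
| "cfp (Lo j) = Inr j"

fun cfq :: "pt \<Rightarrow> pt + nat" where
  "cfq (Up j) = Inr j"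
| "cfq (Lo k) = Inl (Lo k)"

definition comp_edges :: "pt set set \<Rightarrow> pt set set \<Rightarrow> ((pt + nat) \<times> (pt + nat)) set" where
  "comp_edges B D =
     {(cfp a, cfp b) | a b. \<exists>blk\<in>B. a \<in> blk \<and> b \<in> blk}
   \<union> {(cfq a, cfq b) | a b. \<exists>blk\<in>D. a \<in> blk \<and> b \<in> blk}"

definition compose :: "'a part \<Rightarrow> 'a part \<Rightarrow> 'a part" where
  "compose p q = (case p of (w, v, B) \<Rightarrow> case q of (v', u, D) \<Rightarrow>
     (w, u, (\<lambda>a. {b \<in> points (length w) (length u).
                     (Inl a, Inl b) \<in> (comp_edges B D)\<^sup>*}) ` points (length w) (length u)))"

text \<open>Rotations: moving an extreme point to the other row, replacing its colour a by inv a.\<close>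
fun rUL :: "pt \<Rightarrow> pt" where
  "rUL (Up 0) = Lo 0"
| "rUL (Up (Suc i)) = Up i"
| "rUL (Lo j) = Lo (Suc j)"

fun rLU :: "pt \<Rightarrow> pt" where
  "rLU (Lo 0) = Up 0"
| "rLU (Lo (Suc j)) = Lo j"
| "rLU (Up i) = Up (Suc i)"

fun rUR :: "nat \<Rightarrow> nat \<Rightarrow> pt \<Rightarrow> pt" where
  "rUR n m (Up i) = (if i = n then Lo m else Up i)"
| "rUR n m (Lo j) = Lo j"

fun rLR :: "nat \<Rightarrow> nat \<Rightarrow> pt \<Rightarrow> pt" where
  "rLR n m (Lo j) = (if j = m then Up n else Lo j)"
| "rLR n m (Up i) = Up i"

definition one_block :: "'a list \<Rightarrow> 'a list \<Rightarrow> 'a part" where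
  "one_block w v = (w, v, {points (length w) (length v)})"

definition nc_category :: "('a \<Rightarrow> 'a) \<Rightarrow> 'a part set \<Rightarrow> bool" where
  "nc_category cinv C =
    ((\<forall>p\<in>C. is_part p \<and> noncrossing p)
   \<and> (\<forall>a. one_block [a] [a] \<in> C)
   \<and> (\<forall>p\<in>C. \<forall>q\<in>C. tensor p q \<in> C)
   \<and> (\<forall>w v u B D. (w, v, B) \<in> C \<longrightarrow> (v, u, D) \<in> C \<longrightarrow> compose (w, v, B) (v, u, D) \<in> C)
   \<and> (\<forall>p\<in>C. adjoint p \<in> C)
   \<and> (\<forall>a w v B. (a # w, v, B) \<in> C \<longrightarrow> (w, cinv a # v, (image rUL) ` B) \<in> C)
   \<and> (\<forall>a w v B. (w, a # v, B) \<in> C \<longrightarrow> (cinv a # w, v, (image rLU) ` B) \<in> C)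
   \<and> (\<forall>a w v B. (w @ [a], v, B) \<in> C \<longrightarrow>
        (w, v @ [cinv a], (image (rUR (length w) (length v))) ` B) \<in> C)
   \<and> (\<forall>a w v B. (w, v @ [a], B) \<in> C \<longrightarrow>
        (w @ [cinv a], v, (image (rLR (length w) (length v))) ` B) \<in> C))"

datatype col = X | Y

end

theory Submission
  imports Defs
begin

fun fd :: "nat \<Rightarrow> nat \<Rightarrow> pt \<Rightarrow> pt" where
  "fd n m (Up i) = Lo (m + n - 1 - i)"
| "fd n m (Lo j) = Lo j"

lemma fd_step: "fd n (Suc m) (rUR n m x) = fd (Suc n) m x"
  by (cases x) auto

definition loc :: "nat \<Rightarrow> nat \<Rightarrow> nat \<Rightarrow> pt" where
  "loc N n j = (if N - n \<le> j then Up (N - 1 - j) else Lo j)"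

context
  fixes C :: "col part set"
  assumes nc: "nc_category id C"
begin

lemma c_rUR: "(w @ [a], v, B) \<in> C \<Longrightarrow> (w, v @ [a], (image (rUR (length w) (length v))) ` B) \<in> C"
  using nc unfolding nc_category_def by simp

lemma c_rLR: "(w, v @ [a], B) \<in> C \<Longrightarrow> (w @ [a], v, (image (rLR (length w) (length v))) ` B) \<in> C"
  using nc unfolding nc_category_def by simp

lemma c_rUL: "(a # w, v, B) \<in> C \<Longrightarrow> (w, a # v, (image rUL) ` B) \<in> C"
  using nc unfolding nc_category_def by simp

lemma c_adj: "(w, v, B) \<in> C \<Longrightarrow> (v, w, (image swp) ` B) \<in> C"
  using nc unfolding nc_category_def adjoint_def by fastforce

lemma c_comp: "(w, v, B) \<in> C \<Longrightarrow> (v, u, D) \<in> C \<Longrightarrow> Defs.compose (w, v, B) (v, u, D) \<in> C"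
proof -
  have "\<forall>w v u B D. (w, v, B) \<in> C \<longrightarrow> (v, u, D) \<in> C \<longrightarrow> Defs.compose (w, v, B) (v, u, D) \<in> C"
    using nc unfolding nc_category_def by (elim conjE)
  then show "(w, v, B) \<in> C \<Longrightarrow> (v, u, D) \<in> C \<Longrightarrow> Defs.compose (w, v, B) (v, u, D) \<in> C" by blast
qed

lemma c_part: "(w, v, B) \<in> C \<Longrightarrow> is_part (w, v, B)"
proof -
  have "\<forall>p\<in>C. is_part p \<and> noncrossing p"
    using nc unfolding nc_category_def by (elim conjE)
  then show "(w, v, B) \<in> C \<Longrightarrow> is_part (w, v, B)" by blast
qed

lemma down: "(w, v, B) \<in> C \<Longrightarrow> \<exists>B'. ([], v @ rev w, B') \<in> C \<and>
   (\<forall>b\<in>B. \<exists>b'\<in>B'. \<forall>x\<in>b. x \<in> points (length w) (length v) \<longrightarrow> fd (length w) (length v) x \<in> b')"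
proof (induction w arbitrary: v B rule: rev_induct)
  case Nil
  show ?case
  proof (intro exI conjI ballI)
    show "([], v @ rev [], B) \<in> C" using Nil by simp
  next
    fix b assume "b \<in> B"
    then show "\<exists>b'\<in>B. \<forall>x\<in>b. x \<in> points (length []) (length v) \<longrightarrow> fd (length []) (length v) x \<in> b'"
      by (intro bexI[of _ b]) (auto simp: points_def)
  qed
next
  case (snoc a w)
  have "(w, v @ [a], (image (rUR (length w) (length v))) ` B) \<in> C"
    using c_rUR snoc.prems by blast
  from snoc.IH[OF this] obtain B' where B': "([], (v @ [a]) @ rev w, B') \<in> C"
    "\<forall>b\<in>(image (rUR (length w) (length v))) ` B. \<exists>b'\<in>B'. \<forall>x\<in>b. x \<in> points (length w) (length (v@[a])) \<longrightarrow> fd (length w) (length (v@[a])) x \<in> b'"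
    by blast
  show ?case
  proof (intro exI conjI ballI)
    show "([], v @ rev (w @ [a]), B') \<in> C" using B'(1) by simp
  next
    fix b assume b: "b \<in> B"
    then obtain b' where b': "b' \<in> B'" and h: "\<forall>x\<in>rUR (length w) (length v) ` b. x \<in> points (length w) (length (v@[a])) \<longrightarrow> fd (length w) (length (v@[a])) x \<in> b'"
      using B'(2) by blast
    show "\<exists>b'\<in>B'. \<forall>x\<in>b. x \<in> points (length (w @ [a])) (length v) \<longrightarrow> fd (length (w @ [a])) (length v) x \<in> b'"
    proof (intro bexI[OF _ b'] ballI impI)
      fix x assume x: "x \<in> b" "x \<in> points (length (w @ [a])) (length v)"
      have "rUR (length w) (length v) x \<in> points (length w) (length (v@[a]))"
        using x(2) by (cases x) (auto simp: points_def)
      then have "fd (length w) (Suc (length v)) (rUR (length w) (length v) x) \<in> b'"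
        using h x(1) by auto
      then show "fd (length (w @ [a])) (length v) x \<in> b'" by (simp add: fd_step)
    qed
  qed
qed

lemma rot1:
  assumes "([], u, B) \<in> C" "length u = N" "0 < N" "b \<in> B" "\<forall>j\<in>K. j < N \<and> Lo j \<in> b"
  shows "\<exists>u' B' b'. ([], u', B') \<in> C \<and> length u' = N \<and> b' \<in> B' \<and> (\<forall>j\<in>K. Lo (Suc j mod N) \<in> b')"
proof -
  obtain u0 a where u: "u = u0 @ [a]" using assms(2,3) by (cases u rule: rev_exhaust) auto
  have "([] @ [a], u0, (image (rLR 0 (length u0))) ` B) \<in> C"
    using c_rLR[of "[]" u0 a B] assms(1) u by simp
  then have "([a], u0, (image (rLR 0 (length u0))) ` B) \<in> C" by simp
  then have "([], a # u0, (image rUL) ` (image (rLR 0 (length u0))) ` B) \<in> C"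
    using c_rUL by blast
  moreover have "\<forall>j\<in>K. Lo (Suc j mod N) \<in> rUL ` rLR 0 (length u0) ` b"
  proof
    fix j assume j: "j \<in> K"
    then have jl: "j < N" "Lo j \<in> b" using assms(5) by auto
    show "Lo (Suc j mod N) \<in> rUL ` rLR 0 (length u0) ` b"
    proof (cases "j = length u0")
      case True
      then have "rUL (rLR 0 (length u0) (Lo j)) = Lo (Suc j mod N)"
        using assms(2) u by simp
      then show ?thesis using jl(2) by (metis image_eqI)
    next
      case False
      then have "rUL (rLR 0 (length u0) (Lo j)) = Lo (Suc j mod N)"
        using assms(2) u jl(1) by simp
      then show ?thesis using jl(2) by (metis image_eqI)
    qed
  qed
  ultimately show ?thesis using assms(2,4) u
    by (intro exI[of _ "a # u0"] exI[of _ "(image rUL) ` (image (rLR 0 (length u0))) ` B"]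
        exI[of _ "rUL ` rLR 0 (length u0) ` b"]) auto
qed

lemma rot:
  assumes "([], u, B) \<in> C" "length u = N" "0 < N" "b \<in> B" "\<forall>j\<in>J. j < N \<and> Lo j \<in> b"
  shows "\<exists>u' B' b'. ([], u', B') \<in> C \<and> length u' = N \<and> b' \<in> B' \<and> (\<forall>j\<in>J. Lo ((j + d) mod N) \<in> b')"
proof (induction d)
  case 0
  then show ?case using assms by (intro exI[of _ u] exI[of _ B] exI[of _ b]) auto
next
  case (Suc d)
  then obtain u' B' b' where h: "([], u', B') \<in> C" "length u' = N" "b' \<in> B'" "\<forall>j\<in>J. Lo ((j + d) mod N) \<in> b'"
    by blast
  have "\<forall>j\<in>(\<lambda>j. (j + d) mod N) ` J. j < N \<and> Lo j \<in> b'" using h(4) assms(3) by auto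
  from rot1[OF h(1,2) assms(3) h(3) this] obtain u2 B2 b2 where
    "([], u2, B2) \<in> C" "length u2 = N" "b2 \<in> B2" "\<forall>j\<in>(\<lambda>j. (j + d) mod N) ` J. Lo (Suc j mod N) \<in> b2"
    by blast
  then show ?case
    by (intro exI[of _ u2] exI[of _ B2] exI[of _ b2]) (auto simp: mod_Suc_eq)
qed

lemma ext:
  assumes "([], u, B) \<in> C" "length u = N" "b \<in> B" "\<forall>j\<in>J. j < N \<and> Lo j \<in> b"
  shows "n \<le> N \<Longrightarrow> \<exists>w v B' b'. (w, v, B') \<in> C \<and> length w = n \<and> length v = N - n \<and> b' \<in> B' \<and> (\<forall>j\<in>J. loc N n j \<in> b')"
proof (induction n)
  case 0
  then show ?case using assms by (intro exI[of _ "[]"] exI[of _ u] exI[of _ B] exI[of _ b]) (auto simp: loc_def)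
next
  case (Suc n)
  then obtain w v B' b' where h: "(w, v, B') \<in> C" "length w = n" "length v = N - n" "b' \<in> B'"
    "\<forall>j\<in>J. loc N n j \<in> b'" by auto
  obtain v0 a where v: "v = v0 @ [a]" using h(3) Suc.prems by (cases v rule: rev_exhaust) auto
  have "(w @ [a], v0, (image (rLR (length w) (length v0))) ` B') \<in> C"
    using c_rLR h(1) v by blast
  moreover have "\<forall>j\<in>J. loc N (Suc n) j \<in> rLR (length w) (length v0) ` b'"
  proof
    fix j assume j: "j \<in> J"
    then have "j < N" using assms(4) by auto
    then have "rLR (length w) (length v0) (loc N n j) = loc N (Suc n) j"
      using h(2,3) v Suc.prems by (auto simp: loc_def)
    then show "loc N (Suc n) j \<in> rLR (length w) (length v0) ` b'" using h(5) j by (metis image_eqI)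
  qed
  ultimately show ?case using h v Suc.prems
    by (intro exI[of _ "w @ [a]"] exI[of _ v0] exI[of _ "(image (rLR (length w) (length v0))) ` B'"]
        exI[of _ "rLR (length w) (length v0) ` b'"]) auto
qed

lemma edge_p: "blk \<in> B \<Longrightarrow> x \<in> blk \<Longrightarrow> y \<in> blk \<Longrightarrow> (cfp x, cfp y) \<in> comp_edges B D"
  unfolding comp_edges_def by blast

lemma edge_q: "blk \<in> D \<Longrightarrow> x \<in> blk \<Longrightarrow> y \<in> blk \<Longrightarrow> (cfq x, cfq y) \<in> comp_edges B D"
  unfolding comp_edges_def by blast

lemma tolo:
  assumes "blk \<in> B" "Up i \<in> blk" "Lo l \<in> blk" "s = Up i \<or> s = Lo i"
  shows "(Inl s, Inr l) \<in> comp_edges B ((image swp) ` B) \<and> (Inr l, Inl s) \<in> comp_edges B ((image swp) ` B)"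
proof -
  have sb: "swp ` blk \<in> (image swp) ` B" using assms(1) by blast
  have u: "Up l \<in> swp ` blk" using assms(3) by (metis image_eqI swp.simps(2))
  have o: "Lo i \<in> swp ` blk" using assms(2) by (metis image_eqI swp.simps(1))
  show ?thesis using assms(4)
  proof
    assume "s = Up i"
    then show ?thesis using edge_p[OF assms(1) assms(2) assms(3)] edge_p[OF assms(1) assms(3) assms(2)] by simp
  next
    assume "s = Lo i"
    then show ?thesis using edge_q[OF sb u o] edge_q[OF sb o u] by simp
  qed
qed

lemma reach:
  assumes "blk \<in> B" "Up i \<in> blk" "Up i' \<in> blk" "Lo l \<in> blk" "s = Up i \<or> s = Lo i" "t = Up i' \<or> t = Lo i'"
  shows "(Inl s, Inl t) \<in> (comp_edges B ((image swp) ` B))\<^sup>*"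
proof -
  have "(Inl s, Inr l) \<in> comp_edges B ((image swp) ` B)" using tolo[OF assms(1,2,4,5)] by blast
  moreover have "(Inr l, Inl t) \<in> comp_edges B ((image swp) ` B)" using tolo[OF assms(1,3,4,6)] by blast
  ultimately show ?thesis by (meson converse_rtrancl_into_rtrancl r_into_rtrancl)
qed

lemma compose_eq: "Defs.compose (w, v, B) (v, w, D) =
   (w, w, (\<lambda>a. {b \<in> points (length w) (length w). (Inl a, Inl b) \<in> (comp_edges B D)\<^sup>*}) ` points (length w) (length w))"
  by (simp add: compose_def)

lemma comp1:
  assumes "(w, v, B) \<in> C" "length w = n" "0 < n" "blk \<in> B" "Up 0 \<in> blk" "Up (n-1) \<in> blk" "Lo l \<in> blk"
  shows "\<exists>Bc bc. (w, w, Bc) \<in> C \<and> bc \<in> Bc \<and> Up 0 \<in> bc \<and> Up (n-1) \<in> bc \<and> Lo (n-1) \<in> bc"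
proof -
  let ?D = "(image swp) ` B"
  let ?cl = "\<lambda>a. {b \<in> points (length w) (length w). (Inl a, Inl b) \<in> (comp_edges B ?D)\<^sup>*}"
  have "Defs.compose (w, v, B) (v, w, ?D) \<in> C" using c_comp assms(1) c_adj by blast
  then have inC: "(w, w, ?cl ` points (length w) (length w)) \<in> C" by (simp add: compose_eq)
  have pt: "Up (n-1) \<in> points (length w) (length w)" using assms(2,3) by (simp add: points_def)
  have "?cl (Up (n-1)) \<in> ?cl ` points (length w) (length w)" using pt by blast
  moreover have "Up 0 \<in> ?cl (Up (n-1))" "Up (n-1) \<in> ?cl (Up (n-1))" "Lo (n-1) \<in> ?cl (Up (n-1))"
    using reach[OF assms(4,6,5,7)] reach[OF assms(4,6,6,7)] assms(2,3) by (auto simp: points_def)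
  ultimately show ?thesis using inC by blast
qed

lemma points22: "points 2 2 = {Up 0, Up 1, Lo 0, Lo 1}"
  unfolding points_def by (auto simp: less_2_cases_iff)

lemma comp2:
  assumes "(w, v, B) \<in> C" "length w = 2" "blk \<in> B" "Up 0 \<in> blk" "Up 1 \<in> blk" "Lo l \<in> blk"
  shows "one_block w w \<in> C"
proof -
  let ?D = "(image swp) ` B"
  let ?cl = "\<lambda>a. {b \<in> points (length w) (length w). (Inl a, Inl b) \<in> (comp_edges B ?D)\<^sup>*}"
  have "Defs.compose (w, v, B) (v, w, ?D) \<in> C" using c_comp assms(1) c_adj by blast
  then have inC: "(w, w, ?cl ` points (length w) (length w)) \<in> C" by (simp add: compose_eq)
  have all: "?cl a = points 2 2" if a: "a \<in> points 2 2" for a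
  proof -
    have "\<exists>i. (i = 0 \<or> i = 1) \<and> (a = Up i \<or> a = Lo i)" using a by (auto simp: points22)
    then obtain i where i: "Up i \<in> blk" "a = Up i \<or> a = Lo i" using assms(4,5) by blast
    have "(Inl a, Inl t) \<in> (comp_edges B ?D)\<^sup>*" if t: "t \<in> points 2 2" for t
    proof -
      have "\<exists>i'. (i' = 0 \<or> i' = 1) \<and> (t = Up i' \<or> t = Lo i')" using t by (auto simp: points22)
      then obtain i' where "Up i' \<in> blk" "t = Up i' \<or> t = Lo i'" using assms(4,5) by blast
      then show ?thesis using reach[OF assms(3) i(1) _ assms(6) i(2)] by blast
    qed
    then show ?thesis using assms(2) by auto
  qed
  have "?cl ` points (length w) (length w) = {points 2 2}"
    using all assms(2) by (auto simp: points22)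
  then show ?thesis using inC assms(2) by (simp add: one_block_def)
qed

lemma fin: "one_block [c1, c2] [c1, c2] \<in> C \<Longrightarrow> one_block [c2, c2] [c2, c2] \<in> C"
proof -
  assume h: "one_block [c1, c2] [c1, c2] \<in> C"
  let ?P = "points 2 2"
  have "(c1 # [c2], [c1, c2], {?P}) \<in> C" using h by (simp add: one_block_def numeral_2_eq_2)
  then have "([c2], c1 # [c1, c2], (image rUL) ` {?P}) \<in> C" by (rule c_rUL)
  then have "([c2], [c1, c1] @ [c2], {rUL ` ?P}) \<in> C" by simp
  then have "([c2] @ [c2], [c1, c1], (image (rLR 1 2)) ` {rUL ` ?P}) \<in> C"
    using c_rLR[of "[c2]" "[c1,c1]" c2 "{rUL ` ?P}"] by (simp add: numeral_2_eq_2)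
  then have A: "([c2, c2], [c1, c1], {rLR 1 2 ` rUL ` ?P}) \<in> C" by simp
  have "Up 0 \<in> rLR 1 2 ` rUL ` ?P"
  proof -
    have "rLR 1 2 (rUL (Up 1)) = Up 0" by simp
    then show ?thesis by (metis image_eqI insertI1 insert_commute points22)
  qed
  moreover have "Up 1 \<in> rLR 1 2 ` rUL ` ?P"
  proof -
    have "rLR 1 2 (rUL (Lo 1)) = Up 1" by simp
    moreover have "Lo 1 \<in> ?P" by (simp add: points22)
    ultimately show ?thesis by (metis image_eqI)
  qed
  moreover have "Lo 0 \<in> rLR 1 2 ` rUL ` ?P"
  proof -
    have "rLR 1 2 (rUL (Up 0)) = Lo 0" by simp
    moreover have "Up 0 \<in> ?P" by (simp add: points22)
    ultimately show ?thesis by (metis image_eqI)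
  qed
  ultimately show ?thesis using comp2[OF A] by simp
qed

lemma step1:
  assumes "([], u, B) \<in> C" "length u = N" "b \<in> B" "Lo a \<in> b" "Lo bb \<in> b" "Lo c \<in> b"
    "a < bb" "bb < c" "c < N"
  shows "\<exists>w Bc bc. (w, w, Bc) \<in> C \<and> 2 \<le> length w \<and> bc \<in> Bc \<and> Up 0 \<in> bc \<and> Up (length w - 1) \<in> bc \<and> Lo (length w - 1) \<in> bc"
proof -
  define d where "d = N - 1 - c"
  have "\<forall>j\<in>{a, bb, c}. j < N \<and> Lo j \<in> b" using assms by auto
  from rot[OF assms(1,2) _ assms(3) this, of d] assms(9) obtain u' B' b' where
    r: "([], u', B') \<in> C" "length u' = N" "b' \<in> B'" "\<forall>j\<in>{a, bb, c}. Lo ((j + d) mod N) \<in> b'" by auto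
  have m: "(a + d) mod N = a + d" "(bb + d) mod N = bb + d" "(c + d) mod N = N - 1"
    using assms(7-9) d_def by auto
  have J: "\<forall>j\<in>{a + d, bb + d, N - 1}. j < N \<and> Lo j \<in> b'" using r(4) m assms(7-9) d_def by auto
  define n where "n = N - (bb + d)"
  have nN: "n \<le> N" using n_def by simp
  from ext[OF r(1,2,3) J nN] obtain w v B2 b2 where
    e: "(w, v, B2) \<in> C" "length w = n" "length v = N - n" "b2 \<in> B2" "\<forall>j\<in>{a + d, bb + d, N - 1}. loc N n j \<in> b2"
    by blast
  have n2: "2 \<le> n" using n_def d_def assms(7-9) by auto
  have "loc N n (a + d) = Lo (a + d)" "loc N n (bb + d) = Up (n - 1)" "loc N n (N - 1) = Up 0"
    using n_def d_def assms(7-9) by (auto simp: loc_def)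
  then have "Lo (a + d) \<in> b2" "Up (n - 1) \<in> b2" "Up 0 \<in> b2" using e(5) by auto
  from comp1[OF e(1,2) _ e(4) this(3,2,1)] n2 obtain Bc bc where
    "(w, w, Bc) \<in> C" "bc \<in> Bc" "Up 0 \<in> bc" "Up (n - 1) \<in> bc" "Lo (n - 1) \<in> bc" by auto
  then show ?thesis using e(2) n2 by blast
qed

lemma mod3: "2 \<le> (n::nat) \<Longrightarrow> (2 * n - 1 + (n - 1)) mod (2 * n) = n - 2"
proof -
  assume "2 \<le> n"
  then have "2 * n - 1 + (n - 1) = (n - 2) + 2 * n" by simp
  moreover have "(n - 2) mod (2 * n) = n - 2" using \<open>2 \<le> n\<close> by simp
  ultimately show ?thesis by simp
qed

lemma step2:
  assumes "(w, w, Bc) \<in> C" "length w = n" "2 \<le> n" "bc \<in> Bc" "Up 0 \<in> bc" "Up (n - 1) \<in> bc" "Lo (n - 1) \<in> bc"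
  shows "\<exists>w'. length w' = 2 \<and> one_block w' w' \<in> C"
proof -
  from down[OF assms(1)] obtain B1 where B1: "([], w @ rev w, B1) \<in> C"
    "\<forall>b\<in>Bc. \<exists>b'\<in>B1. \<forall>x\<in>b. x \<in> points (length w) (length w) \<longrightarrow> fd (length w) (length w) x \<in> b'"
    by blast
  then obtain b1 where b1: "b1 \<in> B1" "\<forall>x\<in>bc. x \<in> points n n \<longrightarrow> fd n n x \<in> b1"
    using assms(2,4) by blast
  have p1: "Up 0 \<in> points n n" "Up (n - 1) \<in> points n n" "Lo (n - 1) \<in> points n n"
    using assms(3) by (auto simp: points_def)
  have f: "fd n n (Up 0) \<in> b1" "fd n n (Up (n - 1)) \<in> b1" "fd n n (Lo (n - 1)) \<in> b1"
    using b1(2) assms(5,6,7) p1 by blast+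
  have e: "fd n n (Up 0) = Lo (2 * n - 1)" "fd n n (Up (n - 1)) = Lo n"
    using assms(3) by auto
  have "Lo (2 * n - 1) \<in> b1" using f(1) e(1) by metis
  moreover have "Lo n \<in> b1" using f(2) e(2) by metis
  moreover have "Lo (n - 1) \<in> b1" using f(3) by simp
  ultimately have "Lo (2 * n - 1) \<in> b1" "Lo n \<in> b1" "Lo (n - 1) \<in> b1" by auto
  then have J: "\<forall>j\<in>{n - 1, n, 2 * n - 1}. j < 2 * n \<and> Lo j \<in> b1" using assms(3) by auto
  have len: "length (w @ rev w) = 2 * n" using assms(2) by simp
  from rot[OF B1(1) len _ b1(1) J, of "n - 1"] assms(3) obtain u' B' b' where
    r: "([], u', B') \<in> C" "length u' = 2 * n" "b' \<in> B'" "\<forall>j\<in>{n - 1, n, 2 * n - 1}. Lo ((j + (n - 1)) mod (2 * n)) \<in> b'"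
    by auto
  have m: "(n - 1 + (n - 1)) mod (2 * n) = 2 * n - 2" "(n + (n - 1)) mod (2 * n) = 2 * n - 1"
    using assms(3) by auto
  have J2: "\<forall>j\<in>{n - 2, 2 * n - 2, 2 * n - 1}. j < 2 * n \<and> Lo j \<in> b'"
    using r(4) m mod3[OF assms(3)] assms(3) by auto
  from ext[OF r(1,2,3) J2, of 2] assms(3) obtain w' v B2 b2 where
    e: "(w', v, B2) \<in> C" "length w' = 2" "b2 \<in> B2" "\<forall>j\<in>{n - 2, 2 * n - 2, 2 * n - 1}. loc (2 * n) 2 j \<in> b2"
    by auto
  have "loc (2 * n) 2 (n - 2) = Lo (n - 2)" "loc (2 * n) 2 (2 * n - 2) = Up 1" "loc (2 * n) 2 (2 * n - 1) = Up 0"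
    using assms(3) by (auto simp: loc_def)
  then have "Up 0 \<in> b2" "Up 1 \<in> b2" "Lo (n - 2) \<in> b2" using e(4) by auto
  from comp2[OF e(1,2,3) this] show ?thesis using e(2) by blast
qed

end

lemma three_distinct:
  assumes "finite b" "4 \<le> card b"
  shows "\<exists>x y z. x \<in> b \<and> y \<in> b \<and> z \<in> b \<and> x \<noteq> y \<and> y \<noteq> z \<and> x \<noteq> z"
proof -
  have "b \<noteq> {}" using assms(2) by (metis card.empty not_numeral_le_zero)
  then obtain x where x: "x \<in> b" by blast
  have "3 \<le> card (b - {x})" using assms x by simp
  then have "b - {x} \<noteq> {}" by (metis card.empty not_numeral_le_zero)
  then obtain y where y: "y \<in> b - {x}" by blast
  have "2 \<le> card (b - {x} - {y})" using assms x y by (simp add: card_Diff_singleton)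
  then have "b - {x} - {y} \<noteq> {}" by (metis card.empty not_numeral_le_zero)
  then obtain z where z: "z \<in> b - {x} - {y}" by blast
  show ?thesis using x y z by blast
qed

theorem lemma6p1:
  fixes C :: "col part set"
  assumes "nc_category id C"
    and "\<forall>(w, v, B)\<in>C. \<forall>b\<in>B. even (card b)"
    and "\<exists>(w, v, B)\<in>C. \<exists>b\<in>B. card b \<ge> 4"
  shows "one_block [X, X] [X, X] \<in> C \<or> one_block [Y, Y] [Y, Y] \<in> C"
proof -
  note nc = assms(1)
  obtain w v B blk where p: "(w, v, B) \<in> C" "blk \<in> B" "4 \<le> card blk" using assms(3) by blast
  have "is_part (w, v, B)" using c_part[OF nc p(1)] .
  then have sub: "blk \<subseteq> points (length w) (length v)"
    using p(2) unfolding is_part_def partition_on_def by auto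
  have finb: "finite blk" using p(3) by (metis card.infinite not_numeral_le_zero)
  obtain x y z where xyz: "x \<in> blk" "y \<in> blk" "z \<in> blk" "x \<noteq> y" "y \<noteq> z" "x \<noteq> z"
    using three_distinct[OF finb p(3)] by blast
  let ?n = "length w" and ?m = "length v"
  from down[OF nc p(1)] obtain B1 where B1: "([], v @ rev w, B1) \<in> C"
    "\<forall>b\<in>B. \<exists>b'\<in>B1. \<forall>x\<in>b. x \<in> points ?n ?m \<longrightarrow> fd ?n ?m x \<in> b'" by blast
  then obtain b1 where b1: "b1 \<in> B1" "\<forall>x\<in>blk. x \<in> points ?n ?m \<longrightarrow> fd ?n ?m x \<in> b1"
    using p(2) by blast
  have fdlo: "\<exists>j. j < ?n + ?m \<and> fd ?n ?m q = Lo j" if "q \<in> points ?n ?m" for q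
  proof (cases q)
    case (Up i)
    then have "i < ?n" using that by (simp add: points_def)
    then show ?thesis using Up by (intro exI[of _ "?m + ?n - 1 - i"]) (auto simp: fd.simps)
  next
    case (Lo i)
    then have "i < ?m" using that by (simp add: points_def)
    then show ?thesis using Lo by (intro exI[of _ i]) auto
  qed
  have fdinj: "fd ?n ?m q = fd ?n ?m q' \<Longrightarrow> q \<in> points ?n ?m \<Longrightarrow> q' \<in> points ?n ?m \<Longrightarrow> q = q'" for q q'
    by (cases q; cases q') (auto simp: points_def)
  obtain a where a: "a < ?n + ?m" "fd ?n ?m x = Lo a" using fdlo sub xyz(1) by blast
  obtain bb where bb: "bb < ?n + ?m" "fd ?n ?m y = Lo bb" using fdlo sub xyz(2) by blast
  obtain c where c: "c < ?n + ?m" "fd ?n ?m z = Lo c" using fdlo sub xyz(3) by blast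
  have ins: "Lo a \<in> b1" "Lo bb \<in> b1" "Lo c \<in> b1" using b1(2) xyz sub a bb c by auto
  have dist: "a \<noteq> bb" "bb \<noteq> c" "a \<noteq> c"
    using fdinj[of x y] fdinj[of y z] fdinj[of x z] xyz sub a bb c by auto
  have len: "length (v @ rev w) = ?n + ?m" by simp
  have st1: "\<exists>w Bc bc. (w, w, Bc) \<in> C \<and> 2 \<le> length w \<and> bc \<in> Bc \<and> Up 0 \<in> bc \<and> Up (length w - 1) \<in> bc \<and> Lo (length w - 1) \<in> bc"
  proof -
    have "\<exists>i j k. i < j \<and> j < k \<and> k < ?n + ?m \<and> Lo i \<in> b1 \<and> Lo j \<in> b1 \<and> Lo k \<in> b1"
    proof -
      consider "a < bb \<and> bb < c" | "a < c \<and> c < bb" | "bb < a \<and> a < c" | "bb < c \<and> c < a"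
        | "c < a \<and> a < bb" | "c < bb \<and> bb < a" using dist by linarith
      then show ?thesis
        using ins a(1) bb(1) c(1) by cases blast+
    qed
    then obtain i j k where "i < j" "j < k" "k < ?n + ?m" "Lo i \<in> b1" "Lo j \<in> b1" "Lo k \<in> b1" by blast
    from step1[OF nc B1(1) len b1(1) this(4,5,6,1,2,3)] show ?thesis .
  qed
  then obtain w1 Bc bc where s: "(w1, w1, Bc) \<in> C" "2 \<le> length w1" "bc \<in> Bc" "Up 0 \<in> bc"
    "Up (length w1 - 1) \<in> bc" "Lo (length w1 - 1) \<in> bc" by blast
  from step2[OF nc s(1) refl s(2-6)] obtain w' where w': "length w' = 2" "one_block w' w' \<in> C" by blast
  then obtain c1 c2 where "w' = [c1, c2]"
    by (cases w'; cases "tl w'") (auto simp: numeral_2_eq_2)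
  then have "one_block [c2, c2] [c2, c2] \<in> C" using fin[OF nc] w'(2) by simp
  then show ?thesis by (cases c2) auto
qed

end
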